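(* Let $f(n)=\sum_{k=0}^n(-1)^k\binom nk C_k C_{n-k}$ for integers $n\ge 0$. Then for all $n\ge 2$, $$n(n+2)f(n)=16(n-1)^2f(n-2).$$
   Context: $C_k=\binom{2k}{k}\frac{1}{k+1}$ denotes the $k$-th Catalan number. *)

theory Defs
  imports Complex_Main
begin

definition catalan :: "nat \<Rightarrow> real" where
  "catalan k = real ((2*k) choose k) / real (k+1)"

definition catF :: "nat \<Rightarrow> real" where
  "catF n = (\<Sum>k=0..n. (-1)^k * real (n choose k) * catalan k * catalan (n-k))"

end

theory Submission imports Defs begin

definition PP :: "real \<Rightarrow> real \<Rightarrow> real" where
 "PP N K = (-4*N^3+3*N^2+4*N)*K + (-4*N^3+9*N^2-2)*K^2 + 6*N*(N-1)*K^3 - 2*(N-1)*K^4"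

lemma poly_id: fixes N K :: real
  shows "N*(N+2)*N*(N+1)*(K+1)*(K+2)*(2*(N-K)-1)*(2*(N-K)-3) - 4*(N-1)*(N+1)*(N-K)^2*((N-K)^2-1)*(K+1)*(K+2)
    = -(N-K)*(2*K+1)*(N-K+1)*PP N (K+1) - PP N K*(K+1)*(K+2)*(2*(N-K)-3)"
  unfolding PP_def by algebra

lemma gen_div: fixes a b D D1 D0 Q1 Q0 :: real
  assumes "D1 \<noteq> 0" "D0 \<noteq> 0" "D = D1*Q1" "D = D0*Q0"
  shows "(a/D1 - b/D0)*D = a*Q1 - b*Q0"
proof -
  have "(a/D1 - b/D0)*D = (a/D1)*D - (b/D0)*D" by (simp add: algebra_simps)
  also have "(a/D1)*D = a*Q1" using assms(1,3) by simp
  also have "(b/D0)*D = b*Q0" using assms(2,4) by simp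
  finally show ?thesis .
qed

lemma alg: fixes N K x y z :: real
  assumes N: "N \<ge> 2" and K: "K \<ge> 0"
    and d1: "2*(N-K)-1 \<noteq> 0" and d2: "2*(N-K)-3 \<noteq> 0"
    and h1: "z*((K+1)*(K+2)*(2*(N-K)-1)) = -x*(N-K)*(2*K+1)*(N-K+1)"
    and h2: "x*(N-K)^2*((N-K)^2-1) = 4*N*(N-1)*(2*(N-K)-1)*(2*(N-K)-3)*y"
  shows "N*(N+2)*x - 16*(N-1)^2*y = z*PP N (K+1)/(N*(N+1)*(2*(N-(K+1))-1)) - x*PP N K/(N*(N+1)*(2*(N-K)-1))"
proof -
  define M where "M = N - K"
  have e: "2*(N-(K+1))-1 = 2*M-3" unfolding M_def by simp
  have nz: "N \<noteq> 0" "N+1 \<noteq> 0" "N - 1 \<noteq> 0" "K+1 \<noteq> 0" "K+2 \<noteq> 0" using N K by auto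
  have d1': "2*M-1 \<noteq> 0" and d2': "2*M-3 \<noteq> 0" using d1 d2 unfolding M_def by auto
  define D where "D = N*(N+1)*(K+1)*(K+2)*(2*M-1)*(2*M-3)"
  have Dnz: "D \<noteq> 0" unfolding D_def using nz d1' d2' by simp
  have h1': "z*((K+1)*(K+2)*(2*M-1)) = -x*M*(2*K+1)*(M+1)" using h1 unfolding M_def by simp
  have h2': "x*M^2*(M^2-1) = 4*N*(N-1)*(2*M-1)*(2*M-3)*y" using h2 unfolding M_def by simp
  have L: "(N*(N+2)*x - 16*(N-1)^2*y)*D = N*(N+2)*x*D - 4*(N-1)*(N+1)*(K+1)*(K+2)*(4*N*(N-1)*(2*M-1)*(2*M-3)*y)"
    unfolding D_def by algebra
  also have "... = N*(N+2)*x*D - 4*(N-1)*(N+1)*(K+1)*(K+2)*(x*M^2*(M^2-1))" unfolding h2' ..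
  also have "... = x*(N*(N+2)*N*(N+1)*(K+1)*(K+2)*(2*(N-K)-1)*(2*(N-K)-3) - 4*(N-1)*(N+1)*(N-K)^2*((N-K)^2-1)*(K+1)*(K+2))"
    unfolding D_def M_def by algebra
  finally have L: "(N*(N+2)*x - 16*(N-1)^2*y)*D = x*(N*(N+2)*N*(N+1)*(K+1)*(K+2)*(2*(N-K)-1)*(2*(N-K)-3) - 4*(N-1)*(N+1)*(N-K)^2*((N-K)^2-1)*(K+1)*(K+2))" .
  have "(z*PP N (K+1)/(N*(N+1)*(2*M-3)) - x*PP N K/(N*(N+1)*(2*M-1)))*D
     = z*PP N (K+1)*((K+1)*(K+2)*(2*M-1)) - x*PP N K*((K+1)*(K+2)*(2*M-3))"
    by (rule gen_div) (use nz d1' d2' in \<open>simp, simp, simp_all add: D_def algebra_simps\<close>)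
  also have "... = PP N (K+1)*(z*((K+1)*(K+2)*(2*M-1))) - x*PP N K*((K+1)*(K+2)*(2*M-3))" by simp
  also have "... = PP N (K+1)*(-x*M*(2*K+1)*(M+1)) - x*PP N K*((K+1)*(K+2)*(2*M-3))" unfolding h1' ..
  also have "... = x*(-(N-K)*(2*K+1)*(N-K+1)*PP N (K+1) - PP N K*(K+1)*(K+2)*(2*(N-K)-3))"
    unfolding M_def by algebra
  finally have R: "(z*PP N (K+1)/(N*(N+1)*(2*M-3)) - x*PP N K/(N*(N+1)*(2*M-1)))*D = x*(-(N-K)*(2*K+1)*(N-K+1)*PP N (K+1) - PP N K*(K+1)*(K+2)*(2*(N-K)-3))" .
  have "(N*(N+2)*x - 16*(N-1)^2*y)*D = (z*PP N (K+1)/(N*(N+1)*(2*M-3)) - x*PP N K/(N*(N+1)*(2*M-1)))*D"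
    unfolding L R poly_id ..
  then have "N*(N+2)*x - 16*(N-1)^2*y = z*PP N (K+1)/(N*(N+1)*(2*M-3)) - x*PP N K/(N*(N+1)*(2*M-1))"
    using Dnz by simp
  then show ?thesis unfolding e unfolding M_def .
qed

lemma aux_nat: fixes j A B X :: nat
  assumes a: "Suc (Suc (2*j)) * A = X * Suc j" and b: "Suc (2*j) * B = A * Suc j"
  shows "X * Suc j = 2*(2*j+1)*B"
proof -
  have "X * Suc j * Suc j = Suc (Suc (2*j)) * (A * Suc j)" using a by (simp add: algebra_simps)
  also have "... = Suc (Suc (2*j)) * (Suc (2*j) * B)" using b by simp
  also have "... = 2*(2*j+1)*B * Suc j" by (simp add: algebra_simps)
  finally have "X * Suc j * Suc j = 2*(2*j+1)*B * Suc j" .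
  then show ?thesis by (subst (asm) mult_right_cancel) auto
qed

lemma bin_step: "(Suc (Suc (2*j)) choose Suc j) * Suc j = 2*(2*j+1)*(2*j choose j)"
proof -
  have le: "j \<le> Suc (2*j)" by simp
  have e: "Suc (2*j) - j = Suc j" by simp
  have c: "(Suc (2*j) choose j) = (Suc (2*j) choose Suc j)"
    using binomial_symmetric[OF le] unfolding e .
  show ?thesis
    by (rule aux_nat[OF Suc_times_binomial_eq[of "Suc (2*j)" j]]) (subst c, rule Suc_times_binomial_eq)
qed

lemma aux_real: fixes j x b :: real
  assumes "x * (j+1) = 2*(2*j+1)*b" "j \<ge> 0"
  shows "x / (j+2) * (j+2) = 2*(2*j+1)*(b/(j+1))"
  using assms by (simp add: field_simps)

lemma cat_step: "catalan (Suc j) * (real j + 2) = 2*(2*real j+1)*catalan j"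
proof -
  have e: "2*Suc j = Suc (Suc (2*j))" by simp
  have e2: "real (Suc j + 1) = real j + 2" by simp
  have e3: "real (j + 1) = real j + 1" by simp
  define X where "X = real (Suc (Suc (2*j)) choose Suc j)"
  define B where "B = real (2*j choose j)"
  have h: "X * (real j + 1) = 2*(2*real j+1)*B"
    using arg_cong[OF bin_step[of j], of real] unfolding X_def B_def by (simp add: algebra_simps)
  have "catalan (Suc j) = X / (real j + 2)" unfolding catalan_def e X_def e2 ..
  moreover have "catalan j = B / (real j + 1)" unfolding catalan_def B_def e3 ..
  ultimately show ?thesis using aux_real[OF h] by simp
qed

definition T :: "nat \<Rightarrow> nat \<Rightarrow> real" where
  "T n k = (-1)^k * real (n choose k) * catalan k * catalan (n-k)"

lemma T_shift:
  assumes "k \<le> n"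
  shows "T n (Suc k) * ((real k+1)*(real k+2)*(2*(real n-real k)-1))
       = -T n k * (real n-real k)*(2*real k+1)*(real n-real k+1)"
proof (cases "k = n")
  case True then show ?thesis by (simp add: T_def)
next
  case False
  define j where "j = n - k - 1"
  have j: "n - k = Suc j" unfolding j_def using False assms by arith
  have nj: "n - Suc k = j" using j by simp
  have rj: "real n - real k = real j + 1" using j assms by linarith
  have b: "real (n choose Suc k) * (real k + 1) = real (n choose k) * (real j + 1)"
  proof -
    have "(n choose Suc k) * Suc k = n * ((n-1) choose k)"
      using times_binomial_minus1_eq[of "Suc k" n] by (simp add: mult.commute)
    also have "... = (n-k) * (n choose k)" using binomial_absorb_comp[of n k] by simp
    finally have "(n choose Suc k) * Suc k = Suc j * (n choose k)" using j by simp
    from arg_cong[OF this, of real] show ?thesis by (simp add: algebra_simps)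
  qed
  have c1: "catalan (Suc k) * (real k + 2) = 2*(2*real k+1)*catalan k" by (rule cat_step)
  have c2: "catalan (Suc j) * (real j + 2) = 2*(2*real j+1)*catalan j" by (rule cat_step)
  have "T n (Suc k) * ((real k+1)*(real k+2)*(2*(real n-real k)-1))
     = -((-1)^k * (real (n choose Suc k) * (real k + 1)) * (catalan (Suc k) * (real k + 2)) * catalan j * (2*real j + 1))"
    unfolding T_def nj rj by (simp add: algebra_simps)
  also have "... = -((-1)^k * (real (n choose k) * (real j + 1)) * (2*(2*real k+1)*catalan k) * catalan j * (2*real j + 1))"
    unfolding b c1 ..
  also have "... = -((-1)^k * real (n choose k) * catalan k * (real j + 1) * (2*real k+1) * (2*(2*real j+1)*catalan j))"
    by (simp add: algebra_simps)
  also have "... = -((-1)^k * real (n choose k) * catalan k * (real j + 1) * (2*real k+1) * (catalan (Suc j) * (real j + 2)))"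
    unfolding c2 ..
  also have "... = -T n k * (real n-real k)*(2*real k+1)*(real n-real k+1)"
    unfolding T_def j rj by (simp add: algebra_simps)
  finally show ?thesis .
qed

lemma zero01: fixes a :: real shows "a = 0 \<or> a = 1 \<Longrightarrow> a^2*(a^2-1) = 0" by auto

lemma T_down:
  assumes n: "n \<ge> 2" and k: "k \<le> n"
  shows "T n k * (real n - real k)^2*((real n - real k)^2-1)
       = 4*real n*(real n-1)*(2*(real n - real k)-1)*(2*(real n - real k)-3) * T (n-2) k"
proof (cases "k + 2 \<le> n")
  case False
  then have "n - 2 < k" using n by arith
  then have z: "(n-2 choose k) = 0" by simp
  from False k have "n = k \<or> n = k + 1" by arith
  then have "real n - real k = 0 \<or> real n - real k = 1"
  proof
    assume "n = k" then show ?thesis by simp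
  next
    assume "n = k + 1" then have "real n = real k + 1" by simp
    then show ?thesis by simp
  qed
  then have zero: "(real n - real k)^2*((real n - real k)^2-1) = 0"
    by (rule zero01)
  have T0: "T (n-2) k = 0" unfolding T_def z by (simp only: of_nat_0 mult_zero_left mult_zero_right)
  have L0: "T n k * (real n - real k)^2*((real n - real k)^2-1) = T n k * ((real n - real k)^2*((real n - real k)^2-1))"
    by (simp only: mult.assoc)
  show ?thesis unfolding L0 zero T0 by (simp only: mult_zero_left mult_zero_right)
next
  case True
  define j where "j = n - k - 2"
  have j: "n - k = j + 2" unfolding j_def using True by arith
  have rj: "real n - real k = real j + 2" using j True by linarith
  have nj: "n - 2 - k = j" using j by simp
  have b: "real (n choose k) * ((real j + 2)*(real j+1)) = real n*(real n - 1)*real (n-2 choose k)"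
  proof -
    have e1: "(n - k) * (n choose k) = n * ((n-1) choose k)" by (rule binomial_absorb_comp)
    have e2: "((n-1) - k) * ((n-1) choose k) = (n-1) * ((n-1-1) choose k)" by (rule binomial_absorb_comp)
    have f1: "n - 1 - k = j + 1" using j by arith
    have f2: "n - 1 - 1 = n - 2" by arith
    define a where "a = real (n choose k)"
    define b where "b = real ((n-1) choose k)"
    define c where "c = real ((n-2) choose k)"
    have ea: "(real j + 2) * a = real n * b"
      using arg_cong[OF e1, of real] unfolding j a_def b_def by (simp add: algebra_simps)
    have eb: "(real j + 1) * b = (real n - 1) * c"
      using arg_cong[OF e2, of real] n unfolding f1 f2 b_def c_def by (simp add: of_nat_diff algebra_simps)
    have "a * ((real j + 2)*(real j+1)) = ((real j + 2) * a) * (real j + 1)" by (simp only: mult_ac)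
    also have "... = real n * ((real j + 1) * b)" unfolding ea by (simp only: mult_ac)
    also have "... = real n * (real n - 1) * c" unfolding eb by (simp only: mult_ac)
    finally show ?thesis unfolding a_def c_def .
  qed
  have c1: "catalan (Suc (Suc j)) * (real (Suc j) + 2) = 2*(2*real (Suc j)+1)*catalan (Suc j)" by (rule cat_step)
  have c2: "catalan (Suc j) * (real j + 2) = 2*(2*real j+1)*catalan j" by (rule cat_step)
  have cc: "catalan (j+2) * ((real j+3)*(real j+2)) = 4*(2*real j+3)*(2*real j+1)*catalan j"
  proof -
    have "catalan (j+2) * ((real j+3)*(real j+2)) = (catalan (Suc (Suc j)) * (real (Suc j) + 2))*(real j+2)"
      by (simp add: algebra_simps numeral_3_eq_3)
    also have "... = 2*(2*real j+3)*(catalan (Suc j) * (real j + 2))" unfolding c1 by (simp add: algebra_simps)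
    also have "... = 4*(2*real j+3)*(2*real j+1)*catalan j" unfolding c2 by (simp add: algebra_simps)
    finally show ?thesis .
  qed
  have "T n k * (real n - real k)^2*((real n - real k)^2-1)
    = (-1)^k * (real (n choose k) * ((real j + 2)*(real j+1))) * catalan k * (catalan (j+2) * ((real j+3)*(real j+2)))"
    unfolding T_def j rj by (simp add: algebra_simps power2_eq_square)
  also have "... = (-1)^k * (real n*(real n - 1)*real (n-2 choose k)) * catalan k * (4*(2*real j+3)*(2*real j+1)*catalan j)"
    unfolding b cc ..
  also have "... = 4*real n*(real n-1)*(2*(real n - real k)-1)*(2*(real n - real k)-3) * T (n-2) k"
    unfolding T_def nj rj by (simp add: algebra_simps)
  finally show ?thesis .
qed

lemma odd_nz: fixes m :: nat shows "2*real m - 1 \<noteq> 0" "2*real m - 3 \<noteq> 0"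
proof -
  show "2*real m - 1 \<noteq> 0"
  proof
    assume "2*real m - 1 = 0"
    then have "real (2*m) = real (1::nat)" by simp
    then have "2*m = 1" by (simp only: of_nat_eq_iff)
    then show False by arith
  qed
  show "2*real m - 3 \<noteq> 0"
  proof
    assume "2*real m - 3 = 0"
    then have "real (2*m) = real (3::nat)" by simp
    then have "2*m = 3" by (simp only: of_nat_eq_iff)
    then show False by arith
  qed
qed

definition G :: "nat \<Rightarrow> nat \<Rightarrow> real" where
  "G n k = T n k * PP (real n) (real k) / (real n*(real n+1)*(2*(real n - real k)-1))"

lemma step:
  assumes n: "n \<ge> 2" and k: "k \<le> n"
  shows "real n*(real n+2)*T n k - 16*(real n-1)^2*T (n-2) k = G n (Suc k) - G n k"
proof -
  have m: "real n - real k = real (n-k)" using k by (simp add: of_nat_diff)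
  have d1: "2*(real n - real k)-1 \<noteq> 0" unfolding m by (rule odd_nz)
  have d2: "2*(real n - real k)-3 \<noteq> 0" unfolding m by (rule odd_nz)
  have N: "real n \<ge> 2" using n by simp
  have K: "real k \<ge> 0" by simp
  have sk: "real (Suc k) = real k + 1" by simp
  note h1 = T_shift[OF k]
  note h2 = T_down[OF n k]
  show ?thesis unfolding G_def sk
    by (rule alg[OF N K d1 d2 h1 h2])
qed

theorem mainTheorem7:
  fixes n :: nat
  assumes "n \<ge> 2"
  shows "real n * (real n + 2) * catF n = 16 * (real n - 1)^2 * catF (n-2)"
proof -
  have c1: "catF n = (\<Sum>k=0..n. T n k)" unfolding catF_def T_def ..
  have c2: "catF (n-2) = (\<Sum>k=0..n. T (n-2) k)"
  proof -
    have "catF (n-2) = (\<Sum>k=0..n-2. T (n-2) k)" unfolding catF_def T_def ..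
    also have "... = (\<Sum>k=0..n. T (n-2) k)"
    proof (rule sum.mono_neutral_left)
      show "finite {0..n}" by simp
      show "{0..n-2} \<subseteq> {0..n}" by auto
      show "\<forall>i\<in>{0..n} - {0..n-2}. T (n-2) i = 0" by (auto simp: T_def)
    qed
    finally show ?thesis .
  qed
  have "real n * (real n + 2) * catF n - 16 * (real n - 1)^2 * catF (n-2)
     = (\<Sum>k=0..n. real n*(real n+2)*T n k - 16*(real n-1)^2*T (n-2) k)"
    unfolding c1 c2 by (simp add: sum_subtractf sum_distrib_left)
  also have "... = (\<Sum>k=0..n. G n (Suc k) - G n k)"
    by (rule sum.cong) (use assms step in auto)
  also have "... = G n (Suc n) - G n 0" by (rule sum_Suc_diff) simp
  also have "... = 0" by (simp add: G_def T_def PP_def)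
  finally show ?thesis by simp
qed
end
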